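(* Let $q\in\mathbb{C}$ with $0<|q|<1$ and $l,m,n,u\in\mathbb{N}$. Then \[ \sum_{k=0}^{n}\frac{q^{k^2+uk} (q)_{l+m+n-k}} {(q)_k (q)_{l-k}(q)_{m-k}(q)_{n-k} (q)_{u+k}} =\sum_{k=-n}^{n}\frac{(-1)^k q^{(3k^2-k)/2} (q)_{l+m}(q)_{m+n}(q)_{l+n}(q)_u} {(q)_{l-k}(q)_{m-k}(q)_{n-k}(q)_{u-k}(q)_{l+k}(q)_{m+k}(q)_{n+k}(q)_{u+k}}, \] and \[ \sum_{k=0}^{n}\frac{q^{k^2+(u+1)k} (q)_{l+m+n-k+1}} {(q)_k (q)_{l-k}(q)_{m-k}(q)_{n-k}(q)_{u+k+1}} =\sum_{k=-n-1}^{n}\frac{(-1)^k q^{(3k^2+k)/2} (q)_{l+m+1}(q)_{m+n+1}(q)_{l+n+1}(q)_u} {(q)_{l-k}(q)_{m-k}(q)_{n-k}(q)_{u-k}(q)_{l+k+1}(q)_{m+k+1}(q)_{n+k+1}(q)_{u+k+1}}. \]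
   Context: $(q)_n=(q;q)_n=(1-q)(1-q^2)\cdots(1-q^n)$ for $n\ge0$ (with $(q)_0=1$), and $1/(q)_n=0$ for $n<0$. *)

theory Defs
  imports "HOL-Analysis.Analysis"
begin

definition qpoch :: "complex \<Rightarrow> nat \<Rightarrow> complex" where
  "qpoch q n = (\<Prod>i=1..n. 1 - q ^ i)"

definition qinv :: "complex \<Rightarrow> int \<Rightarrow> complex" where
  "qinv q n = (if n < 0 then 0 else 1 / qpoch q (nat n))"

end

theory Submission
  imports Defs
begin


locale qctx =
  fixes q :: complex
  assumes q0: "0 < norm q" and q1: "norm q < 1"
begin

lemma qn0: "q \<noteq> 0" using q0 by auto

lemma qpow_ne1: "(n::nat) \<ge> 1 \<Longrightarrow> 1 - q ^ n \<noteq> 0"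
proof
  assume "n \<ge> 1" "1 - q ^ n = 0"
  then have "norm (q ^ n) = 1" by (simp add: right_minus_eq)
  moreover have "norm (q ^ n) < 1"
    using \<open>n \<ge> 1\<close> q0 q1 by (simp add: norm_power power_less_one_iff)
  ultimately show False by simp
qed

lemma qpowi_ne1: "(n::int) \<ge> 1 \<Longrightarrow> 1 - q powi n \<noteq> 0"
  using qpow_ne1[of "nat n"] by (simp add: power_int_def)

lemma qpoch_nz: "qpoch q n \<noteq> 0"
  unfolding qpoch_def using qpow_ne1 by (auto simp: prod_zero_iff)

lemma qpoch_Suc: "qpoch q (Suc n) = qpoch q n * (1 - q ^ Suc n)"
  unfolding qpoch_def by (simp add: prod.cl_ivl_Suc)

lemma r_neg: "n < 0 \<Longrightarrow> qinv q n = 0" by (simp add: qinv_def)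
lemma r_0[simp]: "qinv q 0 = 1" by (simp add: qinv_def qpoch_def)

lemma r_rec: "(1 - q powi n) * qinv q n = qinv q (n - 1)"
proof (cases "n \<ge> 1")
  case True
  obtain m where m: "n = int (Suc m)" using True by (intro that[of "nat n - 1"]) simp
  have A: "qinv q n = 1 / (qpoch q m * (1 - q ^ Suc m))"
    by (simp add: qinv_def m qpoch_Suc del: of_nat_Suc)
  have B: "qinv q (n - 1) = 1 / qpoch q m" by (simp add: qinv_def m)
  have C: "q powi n = q ^ Suc m" by (simp add: m power_int_def del: of_nat_Suc)
  have D: "1 - q ^ Suc m \<noteq> 0" using qpow_ne1[of "Suc m"] by simp
  show ?thesis unfolding A B C using D qpoch_nz[of m] by (simp add: field_simps del: power_Suc)
next
  case False
  then show ?thesis by (cases "n = 0") (auto simp: qinv_def)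
qed

lemma r_rec': "qinv q (n - 1) = (1 - q powi n) * qinv q n" using r_rec by simp
lemma r_rec2: "qinv q n = (1 - q powi (n+1)) * qinv q (n + 1)" using r_rec[of "n+1"] by simp

definition Qi :: "int \<Rightarrow> complex" where "Qi n = qpoch q (nat n)"

lemma Qi_r: "n \<ge> 0 \<Longrightarrow> Qi n * qinv q n = 1"
  by (simp add: Qi_def qinv_def qpoch_nz)

lemma Qi_rec: "n \<ge> 0 \<Longrightarrow> Qi (n + 1) = Qi n * (1 - q powi (n + 1))"
proof -
  assume "n \<ge> 0"
  then obtain m where "n = int m" using nonneg_eq_int by blast
  then show ?thesis by (simp add: Qi_def qpoch_Suc power_int_def nat_add_distrib del: of_nat_Suc)
qed

abbreviation r where "r \<equiv> qinv q"

lemma pw_add: "q powi (m + n) = q powi m * q powi n"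
  using qn0 by (simp add: power_int_add)

lemma pascal1: "(1 - q powi (x+y)) * r x * r y = r (x-1) * r y + q powi x * r x * r (y-1)"
  unfolding r_rec'[of x] r_rec'[of y] pw_add by (simp add: algebra_simps)

lemma pascal2: "(1 - q powi (x+y)) * r x * r y = q powi y * r (x-1) * r y + r x * r (y-1)"
  unfolding r_rec'[of x] r_rec'[of y] pw_add by (simp add: algebra_simps)

end

lemma sum_shift_int: "(\<Sum>i\<in>{a..b::int}. f i) = (\<Sum>j\<in>{a-d..b-d}. f (j+d))"
  by (rule sum.reindex_bij_witness[of _ "\<lambda>j. j+d" "\<lambda>i. i-d"]) auto

lemma sum_int_telescope:
  assumes "a \<le> b + 1"
  shows "(\<Sum>k\<in>{a..b::int}. f (k+1) - f k) = f (b+1) - (f a :: 'a::ab_group_add)"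
proof -
  have "\<forall>b. a - 1 \<le> b \<longrightarrow> (\<Sum>k\<in>{a..b::int}. f (k+1) - f k) = f (b+1) - f a"
  proof (intro allI impI)
    fix b assume "a - 1 \<le> b"
    then show "(\<Sum>k\<in>{a..b::int}. f (k+1) - f k) = f (b+1) - f a"
    proof (induction b rule: int_ge_induct)
      case base then show ?case by simp
    next
      case (step i)
      have "{a..i+1} = insert (i+1) {a..i}" using step.hyps by auto
      then show ?case using step by (simp add: algebra_simps)
    qed
  qed
  then show ?thesis using assms by auto
qed



context qctx begin

lemma V1:
  assumes "c \<ge> 0" "B \<ge> 0"
  shows "(\<Sum>i\<in>{0..B}. q powi ((A-i)*(B-i)) * r (A-i) * r (B-i) * r i * r (c+i))
       = Qi (A+B+c) * r A * r B * r (A+c) * r (B+c)"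
proof -
  obtain b where b: "B = int b" using assms(2) nonneg_eq_int by blast
  have "\<forall>A c. c \<ge> 0 \<longrightarrow> (\<Sum>i\<in>{0..int b}. q powi ((A-i)*(int b-i)) * r (A-i) * r (int b-i) * r i * r (c+i))
       = Qi (A+int b+c) * r A * r (int b) * r (A+c) * r (int b+c)"
  proof (induction b)
    case 0
    show ?case
    proof (intro allI impI)
      fix A c :: int assume c: "c \<ge> 0"
      show "(\<Sum>i\<in>{0..int 0}. q powi ((A-i)*(int 0-i)) * r (A-i) * r (int 0-i) * r i * r (c+i))
       = Qi (A+int 0+c) * r A * r (int 0) * r (A+c) * r (int 0+c)"
      proof (cases "A \<ge> 0")
        case True then show ?thesis using Qi_r[of "A+c"] c by (simp add: algebra_simps)
      next
        case False then show ?thesis by (simp add: r_neg)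
      qed
    qed
  next
    case (Suc b)
    show ?case
    proof (intro allI impI)
      fix A c :: int assume c: "c \<ge> 0"
      define B where "B = int b"
      have B0: "B \<ge> 0" by (simp add: B_def)
      have IH1: "(\<Sum>i\<in>{0..B}. q powi ((A-1-i)*(B-i)) * r (A-1-i) * r (B-i) * r i * r (c+1+i))
          = Qi (A-1+B+(c+1)) * r (A-1) * r B * r (A-1+(c+1)) * r (B+(c+1))"
        unfolding B_def by (rule Suc.IH[rule_format]) (use c in simp)
      have IH2: "(\<Sum>i\<in>{0..B}. q powi ((A-i)*(B-i)) * r (A-i) * r (B-i) * r i * r (c+i))
          = Qi (A+B+c) * r A * r B * r (A+c) * r (B+c)"
        unfolding B_def by (rule Suc.IH[rule_format]) (use c in simp)
      let ?L = "\<Sum>i\<in>{0..B+1}. q powi ((A-i)*(B+1-i)) * r (A-i) * r (B+1-i) * r i * r (c+i)"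
      have "(1 - q powi (B+1)) * ?L = (\<Sum>i\<in>{0..B+1}. q powi ((A-i)*(B+1-i)) * r (A-i) * r (c+i) * ((1 - q powi (i + (B+1-i))) * r i * r (B+1-i)))"
        by (simp add: sum_distrib_left algebra_simps)
      also have "\<dots> = (\<Sum>i\<in>{0..B+1}. q powi ((A-i)*(B+1-i)) * r (A-i) * r (c+i) * (r (i-1) * r (B+1-i)))
                    + (\<Sum>i\<in>{0..B+1}. q powi ((A-i)*(B+1-i)) * r (A-i) * r (c+i) * (q powi i * r i * r (B+1-i-1)))"
        unfolding pascal1 by (simp add: sum.distrib algebra_simps)
      also have "(\<Sum>i\<in>{0..B+1}. q powi ((A-i)*(B+1-i)) * r (A-i) * r (c+i) * (r (i-1) * r (B+1-i)))
          = (\<Sum>i\<in>{0..B}. q powi ((A-1-i)*(B-i)) * r (A-1-i) * r (B-i) * r i * r (c+1+i))"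
      proof -
        have "(\<Sum>i\<in>{0..B+1}. q powi ((A-i)*(B+1-i)) * r (A-i) * r (c+i) * (r (i-1) * r (B+1-i)))
            = (\<Sum>j\<in>{-1..B}. q powi ((A-(j+1))*(B+1-(j+1))) * r (A-(j+1)) * r (c+(j+1)) * (r (j+1-1) * r (B+1-(j+1))))"
          by (subst sum_shift_int[where d=1]) simp
        also have "\<dots> = (\<Sum>j\<in>{0..B}. q powi ((A-(j+1))*(B+1-(j+1))) * r (A-(j+1)) * r (c+(j+1)) * (r (j+1-1) * r (B+1-(j+1))))"
          by (rule sum.mono_neutral_right) (auto simp: r_neg)
        finally show ?thesis by (simp add: algebra_simps)
      qed
      also have "(\<Sum>i\<in>{0..B+1}. q powi ((A-i)*(B+1-i)) * r (A-i) * r (c+i) * (q powi i * r i * r (B+1-i-1)))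
          = q powi A * (\<Sum>i\<in>{0..B}. q powi ((A-i)*(B-i)) * r (A-i) * r (B-i) * r i * r (c+i))"
      proof -
        have "(\<Sum>i\<in>{0..B+1}. q powi ((A-i)*(B+1-i)) * r (A-i) * r (c+i) * (q powi i * r i * r (B+1-i-1)))
           = (\<Sum>i\<in>{0..B}. q powi ((A-i)*(B+1-i)) * r (A-i) * r (c+i) * (q powi i * r i * r (B+1-i-1)))"
          by (rule sum.mono_neutral_right) (auto simp: r_neg)
        also have "\<dots> = (\<Sum>i\<in>{0..B}. q powi A * (q powi ((A-i)*(B-i)) * r (A-i) * r (B-i) * r i * r (c+i)))"
        proof (rule sum.cong)
          fix i assume "i \<in> {0..B}"
          have "q powi ((A-i)*(B+1-i)) * q powi i = q powi A * q powi ((A-i)*(B-i))"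
            unfolding pw_add[symmetric] by (simp add: algebra_simps)
          then show "q powi ((A-i)*(B+1-i)) * r (A-i) * r (c+i) * (q powi i * r i * r (B+1-i-1))
             = q powi A * (q powi ((A-i)*(B-i)) * r (A-i) * r (B-i) * r i * r (c+i))"
            by (simp add: algebra_simps)
        qed simp
        finally show ?thesis by (simp add: sum_distrib_left)
      qed
      finally have main: "(1 - q powi (B+1)) * ?L = Qi (A-1+B+(c+1)) * r (A-1) * r B * r (A-1+(c+1)) * r (B+(c+1))
                    + q powi A * (Qi (A+B+c) * r A * r B * r (A+c) * r (B+c))"
        using IH1 IH2 by simp
      have rhs: "(1 - q powi (B+1)) * (Qi (A+(B+1)+c) * r A * r (B+1) * r (A+c) * r (B+1+c))
          = Qi (A-1+B+(c+1)) * r (A-1) * r B * r (A-1+(c+1)) * r (B+(c+1))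
                    + q powi A * (Qi (A+B+c) * r A * r B * r (A+c) * r (B+c))"
      proof (cases "A \<ge> 0")
        case False then show ?thesis by (simp add: r_neg)
      next
        case True
        have i1: "A+(B+1)+c = A+B+c+1" "A-1+B+(c+1) = A+B+c" "A-1+(c+1) = A+c" "B+(c+1) = B+c+1" "B+1+c = B+c+1"
          by auto
        have e1: "Qi (A+B+c+1) = Qi (A+B+c) * (1 - q powi (A+B+c+1))"
          using Qi_rec[of "A+B+c"] True B0 c by simp
        have e2: "r B = (1 - q powi (B+1)) * r (B+1)" using r_rec[of "B+1"] by simp
        have e3: "r (A-1) = (1 - q powi A) * r A" by (rule r_rec')
        have e4: "r (B+c) = (1 - q powi (B+c+1)) * r (B+c+1)" by (rule r_rec2)
        have e5: "q powi (A+B+c+1) = q powi A * q powi (B+c+1)"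
          using pw_add[of A "B+c+1"] by (simp add: add.assoc)
        show ?thesis unfolding i1 e1 e2 e3 e4 e5 by algebra
      qed
      have ne: "1 - q powi (B+1) \<noteq> 0" using qpowi_ne1[of "B+1"] B0 by simp
      have "?L = Qi (A+(B+1)+c) * r A * r (B+1) * r (A+c) * r (B+1+c)"
        using mult_left_cancel[OF ne, THEN iffD1, OF trans[OF main rhs[symmetric]]] .
      then show "(\<Sum>i\<in>{0..int (Suc b)}. q powi ((A-i)*(int (Suc b)-i)) * r (A-i) * r (int (Suc b)-i) * r i * r (c+i))
       = Qi (A+int (Suc b)+c) * r A * r (int (Suc b)) * r (A+c) * r (int (Suc b)+c)"
        unfolding B_def by (simp add: algebra_simps)
    qed
  qed
  then show ?thesis using assms b by blast
qed


lemma V2: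
  assumes "c \<ge> 0" "B \<ge> 0"
  shows "(\<Sum>i\<in>{0..B}. q powi (i*(i+c)) * r i * r (A-i) * r (B-i) * r (c+i))
       = Qi (A+B+c) * r A * r B * r (A+c) * r (B+c)"
proof -
  obtain b where b: "B = int b" using assms(2) nonneg_eq_int by blast
  have "\<forall>A c. c \<ge> 0 \<longrightarrow> (\<Sum>i\<in>{0..int b}. q powi (i*(i+c)) * r i * r (A-i) * r (int b-i) * r (c+i))
       = Qi (A+int b+c) * r A * r (int b) * r (A+c) * r (int b+c)"
  proof (induction b)
    case 0
    show ?case
    proof (intro allI impI)
      fix A c :: int assume c: "c \<ge> 0"
      show "(\<Sum>i\<in>{0..int 0}. q powi (i*(i+c)) * r i * r (A-i) * r (int 0-i) * r (c+i))
       = Qi (A+int 0+c) * r A * r (int 0) * r (A+c) * r (int 0+c)"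
      proof (cases "A \<ge> 0")
        case True then show ?thesis using Qi_r[of "A+c"] c by (simp add: algebra_simps)
      next
        case False then show ?thesis by (simp add: r_neg)
      qed
    qed
  next
    case (Suc b)
    show ?case
    proof (intro allI impI)
      fix A c :: int assume c: "c \<ge> 0"
      define B where "B = int b"
      have B0: "B \<ge> 0" by (simp add: B_def)
      have IH1: "(\<Sum>i\<in>{0..B}. q powi (i*(i+(c+1))) * r i * r (A-1-i) * r (B-i) * r (c+1+i))
          = Qi (A-1+B+(c+1)) * r (A-1) * r B * r (A-1+(c+1)) * r (B+(c+1))"
        unfolding B_def by (rule Suc.IH[rule_format]) (use c in simp)
      have IH2: "(\<Sum>i\<in>{0..B}. q powi (i*(i+c)) * r i * r (A-i) * r (B-i) * r (c+i))
          = Qi (A+B+c) * r A * r B * r (A+c) * r (B+c)"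
        unfolding B_def by (rule Suc.IH[rule_format]) (use c in simp)
      let ?L = "\<Sum>i\<in>{0..B+1}. q powi (i*(i+c)) * r i * r (A-i) * r (B+1-i) * r (c+i)"
      have "(1 - q powi (B+1)) * ?L = (\<Sum>i\<in>{0..B+1}. q powi (i*(i+c)) * r (A-i) * r (c+i) * ((1 - q powi (i + (B+1-i))) * r i * r (B+1-i)))"
        by (simp add: sum_distrib_left algebra_simps)
      also have "\<dots> = (\<Sum>i\<in>{0..B+1}. q powi (i*(i+c)) * r (A-i) * r (c+i) * (q powi (B+1-i) * r (i-1) * r (B+1-i)))
                    + (\<Sum>i\<in>{0..B+1}. q powi (i*(i+c)) * r (A-i) * r (c+i) * (r i * r (B+1-i-1)))"
        unfolding pascal2 by (simp add: sum.distrib algebra_simps)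
      also have "(\<Sum>i\<in>{0..B+1}. q powi (i*(i+c)) * r (A-i) * r (c+i) * (q powi (B+1-i) * r (i-1) * r (B+1-i)))
          = q powi (B+c+1) * (\<Sum>i\<in>{0..B}. q powi (i*(i+(c+1))) * r i * r (A-1-i) * r (B-i) * r (c+1+i))"
      proof -
        have "(\<Sum>i\<in>{0..B+1}. q powi (i*(i+c)) * r (A-i) * r (c+i) * (q powi (B+1-i) * r (i-1) * r (B+1-i)))
            = (\<Sum>j\<in>{-1..B}. q powi ((j+1)*((j+1)+c)) * r (A-(j+1)) * r (c+(j+1)) * (q powi (B+1-(j+1)) * r (j+1-1) * r (B+1-(j+1))))"
          by (subst sum_shift_int[where d=1]) simp
        also have "\<dots> = (\<Sum>j\<in>{0..B}. q powi ((j+1)*((j+1)+c)) * r (A-(j+1)) * r (c+(j+1)) * (q powi (B+1-(j+1)) * r (j+1-1) * r (B+1-(j+1))))"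
          by (rule sum.mono_neutral_right) (auto simp: r_neg)
        also have "\<dots> = (\<Sum>i\<in>{0..B}. q powi (B+c+1) * (q powi (i*(i+(c+1))) * r i * r (A-1-i) * r (B-i) * r (c+1+i)))"
        proof (rule sum.cong)
          fix i assume "i \<in> {0..B}"
          have "q powi ((i+1)*((i+1)+c)) * q powi (B+1-(i+1)) = q powi (B+c+1) * q powi (i*(i+(c+1)))"
            unfolding pw_add[symmetric] by (simp add: algebra_simps)
          then show "q powi ((i+1)*((i+1)+c)) * r (A-(i+1)) * r (c+(i+1)) * (q powi (B+1-(i+1)) * r (i+1-1) * r (B+1-(i+1)))
             = q powi (B+c+1) * (q powi (i*(i+(c+1))) * r i * r (A-1-i) * r (B-i) * r (c+1+i))"
            by (simp add: algebra_simps)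
        qed simp
        finally show ?thesis by (simp add: sum_distrib_left)
      qed
      also have "(\<Sum>i\<in>{0..B+1}. q powi (i*(i+c)) * r (A-i) * r (c+i) * (r i * r (B+1-i-1)))
          = (\<Sum>i\<in>{0..B}. q powi (i*(i+c)) * r i * r (A-i) * r (B-i) * r (c+i))"
      proof -
        have "(\<Sum>i\<in>{0..B+1}. q powi (i*(i+c)) * r (A-i) * r (c+i) * (r i * r (B+1-i-1)))
           = (\<Sum>i\<in>{0..B}. q powi (i*(i+c)) * r (A-i) * r (c+i) * (r i * r (B+1-i-1)))"
          by (rule sum.mono_neutral_right) (auto simp: r_neg)
        then show ?thesis by (simp add: algebra_simps)
      qed
      finally have main: "(1 - q powi (B+1)) * ?L = q powi (B+c+1) * (Qi (A-1+B+(c+1)) * r (A-1) * r B * r (A-1+(c+1)) * r (B+(c+1)))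
                    + Qi (A+B+c) * r A * r B * r (A+c) * r (B+c)"
        using IH1 IH2 by simp
      have rhs: "(1 - q powi (B+1)) * (Qi (A+(B+1)+c) * r A * r (B+1) * r (A+c) * r (B+1+c))
          = q powi (B+c+1) * (Qi (A-1+B+(c+1)) * r (A-1) * r B * r (A-1+(c+1)) * r (B+(c+1)))
                    + Qi (A+B+c) * r A * r B * r (A+c) * r (B+c)"
      proof (cases "A \<ge> 0")
        case False then show ?thesis by (simp add: r_neg)
      next
        case True
        have i1: "A+(B+1)+c = A+B+c+1" "A-1+B+(c+1) = A+B+c" "A-1+(c+1) = A+c" "B+(c+1) = B+c+1" "B+1+c = B+c+1"
          by auto
        have e1: "Qi (A+B+c+1) = Qi (A+B+c) * (1 - q powi (A+B+c+1))"
          using Qi_rec[of "A+B+c"] True B0 c by simp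
        have e2: "r B = (1 - q powi (B+1)) * r (B+1)" using r_rec[of "B+1"] by simp
        have e3: "r (A-1) = (1 - q powi A) * r A" by (rule r_rec')
        have e4: "r (B+c) = (1 - q powi (B+c+1)) * r (B+c+1)" by (rule r_rec2)
        have e5: "q powi (A+B+c+1) = q powi A * q powi (B+c+1)"
          using pw_add[of A "B+c+1"] by (simp add: add.assoc)
        show ?thesis unfolding i1 e1 e2 e3 e4 e5 by algebra
      qed
      have ne: "1 - q powi (B+1) \<noteq> 0" using qpowi_ne1[of "B+1"] B0 by simp
      have "?L = Qi (A+(B+1)+c) * r A * r (B+1) * r (A+c) * r (B+1+c)"
        using mult_left_cancel[OF ne, THEN iffD1, OF trans[OF main rhs[symmetric]]] .
      then show "(\<Sum>i\<in>{0..int (Suc b)}. q powi (i*(i+c)) * r i * r (A-i) * r (int (Suc b)-i) * r (c+i))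
       = Qi (A+int (Suc b)+c) * r A * r (int (Suc b)) * r (A+c) * r (int (Suc b)+c)"
        unfolding B_def by (simp add: algebra_simps)
    qed
  qed
  then show ?thesis using assms b by blast
qed

end


lemma frac_aux: fixes D N P X S al :: complex assumes "D \<noteq> 0" "X*(D - N*P) = al*S"
  shows "X*(1 - N/D*P) = (al/D)*S"
proof -
  have "X*(1 - N/D*P) = X*(D - N*P)/D" using assms(1) by (simp add: field_simps)
  also have "\<dots> = (al/D)*S" using assms(2) by simp
  finally show ?thesis .
qed

lemma wz_even_alg:
  fixes x y al be ga :: complex
  assumes xy: "x*y=1" and n1: "1-al \<noteq> 0" and n2: "1-al*be \<noteq> 0" and n3: "1-al*ga \<noteq> 0"
  shows "(1+x)*(1 - (1-al*be*ga)/((1-al)*(1-al*be)*(1-al*ga)) * ((1-al*y)*(1-al*x)))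
       = (al/((1-al)*(1-al*be)*(1-al*ga)))*(x^2*(1-al*y)*(1-be*y)*(1-ga*y) + y*(1-al*x)*(1-be*x)*(1-ga*x))"
proof (rule frac_aux)
  show "(1+x)*((1-al)*(1-al*be)*(1-al*ga) - (1-al*be*ga) * ((1-al*y)*(1-al*x)))
       = al*(x^2*(1-al*y)*(1-be*y)*(1-ga*y) + y*(1-al*x)*(1-be*x)*(1-ga*x))"
    using xy by algebra
  show "(1-al)*(1-al*be)*(1-al*ga) \<noteq> 0" using n1 n2 n3 by simp
qed

lemma wz_odd_alg:
  fixes x y al be ga q :: complex
  assumes xy: "x*y=1" and n1: "1-al \<noteq> 0" and n2: "1-q*al*be \<noteq> 0" and n3: "1-q*al*ga \<noteq> 0"
  shows "(1-q*x^2)*(1 - (1-q*al*be*ga)/((1-al)*(1-q*al*be)*(1-q*al*ga)) * ((1-al*y)*(1-q*al*x)))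
       = (al/((1-al)*(1-q*al*be)*(1-q*al*ga)))*(q*x^2*(1-q*x)*(1-al*y)*(1-be*y)*(1-ga*y) + y*(1-x)*(1-q*al*x)*(1-q*be*x)*(1-q*ga*x))"
proof (rule frac_aux)
  show "(1-q*x^2)*((1-al)*(1-q*al*be)*(1-q*al*ga) - (1-q*al*be*ga) * ((1-al*y)*(1-q*al*x)))
       = al*(q*x^2*(1-q*x)*(1-al*y)*(1-be*y)*(1-ga*y) + y*(1-x)*(1-q*al*x)*(1-q*be*x)*(1-q*ga*x))"
    using xy by algebra
  show "(1-al)*(1-q*al*be)*(1-q*al*ga) \<noteq> 0" using n1 n2 n3 by simp
qed

context qctx begin

definition E :: "int \<Rightarrow> complex" where "E k = (-1) powi k * q powi ((3*k^2 - k) div 2)"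
definition pe :: "int \<Rightarrow> int \<Rightarrow> complex" where "pe x k = r (x-k) * r (x+k)"

lemma E_succ: "E (k+1) = -(q * (q powi k)^3) * E k"
proof -
  have d: "(3*(k+1)^2 - (k+1)) div 2 = (3*k^2 - k) div 2 + (3*k+1)"
  proof -
    have "3*(k+1)^2 - (k+1) = (3*k^2 - k) + (3*k+1)*2" by (simp add: power2_eq_square algebra_simps)
    then show ?thesis by (simp only: div_mult_self1)
  qed
  have m1: "((-1::complex) powi (k+1)) = - ((-1) powi k)"
    by (simp add: power_int_add)
  have p3: "q powi (k*3) = (q powi k)^3"
    by (simp add: power_int_mult)
  have p: "q powi (3*k+1) = q * (q powi k)^3"
    using pw_add[of "k*3" 1] p3 by (simp add: mult.commute)
  have "E (k+1) = (-1) powi (k+1) * q powi ((3*k^2 - k) div 2 + (3*k+1))"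
    unfolding E_def d ..
  also have "\<dots> = - ((-1) powi k) * (q powi ((3*k^2 - k) div 2) * (q * (q powi k)^3))"
    using p unfolding m1 pw_add[of "(3*k^2 - k) div 2" "3*k+1"] by simp
  finally show ?thesis unfolding E_def by simp
qed

lemma E_neg: "E (-k) = q powi k * E k"
proof -
  have d: "(3*(-k)^2 - (-k)) div 2 = (3*k^2 - k) div 2 + k"
  proof -
    have "3*(-k)^2 - (-k) = (3*k^2 - k) + k*2" by (simp add: algebra_simps)
    then show ?thesis by (simp only: div_mult_self1)
  qed
  have "E (-k) = (-1) powi (-k) * q powi ((3*k^2 - k) div 2 + k)"
    unfolding E_def d ..
  also have "\<dots> = (-1) powi k * (q powi ((3*k^2 - k) div 2) * q powi k)"
    unfolding pw_add power_int_minus_one_minus ..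
  finally show ?thesis unfolding E_def by simp
qed

lemma pw_neg: "q powi k * q powi (-k) = 1"
  using qn0 by (simp add: power_int_minus field_simps)

lemma wz_even_pt:
  assumes a0: "a \<ge> 0" and b0: "b \<ge> 0" and c0: "c \<ge> 0"
  shows "(1 + q powi k) * (E k * pe (a+1) k * pe b k * pe c k)
     = (1 - q powi (a+b+c+1)) / ((1 - q powi (a+1)) * (1 - q powi (a+b+1)) * (1 - q powi (a+c+1)))
         * ((1 + q powi k) * (E k * pe a k * pe b k * pe c k))
       + ((- (q powi (a+1) / ((1 - q powi (a+1)) * (1 - q powi (a+b+1)) * (1 - q powi (a+c+1))))
            * (q powi (-(k+1)) * (1 - q powi (a+1+(k+1))) * (1 - q powi (b+(k+1))) * (1 - q powi (c+(k+1)))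
            * (E (k+1) * pe (a+1) (k+1) * pe b (k+1) * pe c (k+1))))
        - (- (q powi (a+1) / ((1 - q powi (a+1)) * (1 - q powi (a+b+1)) * (1 - q powi (a+c+1))))
            * (q powi (-k) * (1 - q powi (a+1+k)) * (1 - q powi (b+k)) * (1 - q powi (c+k))
            * (E k * pe (a+1) k * pe b k * pe c k))))"
proof -
  define x where "x = q powi k"
  define y where "y = q powi (-k)"
  define al where "al = q powi (a+1)"
  define be where "be = q powi b"
  define ga where "ga = q powi c"
  define W where "W = pe (a+1) k * pe b k * pe c k"
  define D where "D = (1 - al) * (1 - al*be) * (1 - al*ga)"
  define R where "R = (1 - al*be*ga) / D"
  define Lm where "Lm = al / D"
  have xy: "x * y = 1" unfolding x_def y_def by (rule pw_neg)
  have n1: "1 - al \<noteq> 0" unfolding al_def using qpowi_ne1[of "a+1"] a0 by simp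
  have n2: "1 - al*be \<noteq> 0" unfolding al_def be_def using qpowi_ne1[of "a+1+b"] a0 b0 pw_add[of "a+1" b] by simp
  have n3: "1 - al*ga \<noteq> 0" unfolding al_def ga_def using qpowi_ne1[of "a+1+c"] a0 c0 pw_add[of "a+1" c] by simp
  have alg: "(1+x)*(1 - R * ((1-al*y)*(1-al*x))) = Lm*(x^2*(1-al*y)*(1-be*y)*(1-ga*y) + y*(1-al*x)*(1-be*x)*(1-ga*x))"
    unfolding R_def Lm_def D_def by (rule wz_even_alg[OF xy n1 n2 n3])
  have P1: "q powi (a+b+1) = al*be" unfolding al_def be_def using pw_add[of "a+1" b] by (simp add: algebra_simps)
  have P2: "q powi (a+c+1) = al*ga" unfolding al_def ga_def using pw_add[of "a+1" c] by (simp add: algebra_simps)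
  have P3: "q powi (a+b+c+1) = al*be*ga" unfolding al_def be_def ga_def
    using pw_add[of "a+1" b] pw_add[of "a+1+b" c] by (simp add: algebra_simps)
  have P4: "q powi (a+1+k) = al*x" unfolding al_def x_def by (rule pw_add)
  have P5: "q powi (b+k) = be*x" unfolding be_def x_def by (rule pw_add)
  have P6: "q powi (c+k) = ga*x" unfolding ga_def x_def by (rule pw_add)
  have P7: "q powi (-(k+1)) = y / q" unfolding y_def using pw_add[of "-k" "-1"] qn0
    by (simp add: power_int_minus field_simps)
  have ES: "E (k+1) = -(q * x^3) * E k" unfolding x_def by (rule E_succ)
  have F1: "(1 - q powi (a+1+(k+1))) * pe (a+1) (k+1) = (1 - al*y) * pe (a+1) k"
  proof -
    have u1: "(1 - q powi (a+1+(k+1))) * r (a+1+(k+1)) = r (a+1+k)" using r_rec[of "a+1+(k+1)"] by (simp add: algebra_simps)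
    have u2: "r (a+1-(k+1)) = (1 - al*y) * r (a+1-k)"
      using r_rec2[of "a-k"] pw_add[of "a+1" "-k"] unfolding al_def y_def by (simp add: algebra_simps)
    have "(1 - q powi (a+1+(k+1))) * pe (a+1) (k+1) = r (a+1-(k+1)) * ((1 - q powi (a+1+(k+1))) * r (a+1+(k+1)))"
      by (simp add: pe_def ac_simps)
    also have "\<dots> = (1 - al*y) * r (a+1-k) * r (a+1+k)" by (simp only: u1 u2)
    finally show ?thesis by (simp add: pe_def ac_simps)
  qed
  have F2: "(1 - q powi (b+(k+1))) * pe b (k+1) = (1 - be*y) * pe b k"
  proof -
    have u1: "(1 - q powi (b+(k+1))) * r (b+(k+1)) = r (b+k)" using r_rec[of "b+(k+1)"] by (simp add: algebra_simps)
    have u2: "r (b-(k+1)) = (1 - be*y) * r (b-k)"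
      using r_rec'[of "b-k"] pw_add[of b "-k"] unfolding be_def y_def by (simp add: algebra_simps)
    have "(1 - q powi (b+(k+1))) * pe (b) (k+1) = r (b-(k+1)) * ((1 - q powi (b+(k+1))) * r (b+(k+1)))"
      by (simp add: pe_def ac_simps)
    also have "\<dots> = (1 - be*y) * r (b-k) * r (b+k)" by (simp only: u1 u2)
    finally show ?thesis by (simp add: pe_def ac_simps)
  qed
  have F3: "(1 - q powi (c+(k+1))) * pe c (k+1) = (1 - ga*y) * pe c k"
  proof -
    have u1: "(1 - q powi (c+(k+1))) * r (c+(k+1)) = r (c+k)" using r_rec[of "c+(k+1)"] by (simp add: algebra_simps)
    have u2: "r (c-(k+1)) = (1 - ga*y) * r (c-k)"
      using r_rec'[of "c-k"] pw_add[of c "-k"] unfolding ga_def y_def by (simp add: algebra_simps)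
    have "(1 - q powi (c+(k+1))) * pe (c) (k+1) = r (c-(k+1)) * ((1 - q powi (c+(k+1))) * r (c+(k+1)))"
      by (simp add: pe_def ac_simps)
    also have "\<dots> = (1 - ga*y) * r (c-k) * r (c+k)" by (simp only: u1 u2)
    finally show ?thesis by (simp add: pe_def ac_simps)
  qed
  have F4: "pe a k = (1 - al*y) * (1 - al*x) * pe (a+1) k"
  proof -
    have u1: "r (a-k) = (1 - al*y) * r (a+1-k)"
      using r_rec2[of "a-k"] pw_add[of "a+1" "-k"] unfolding al_def y_def by (simp add: algebra_simps)
    have u2: "r (a+k) = (1 - al*x) * r (a+1+k)"
      using r_rec2[of "a+k"] pw_add[of "a+1" k] unfolding al_def x_def by (simp add: algebra_simps)
    show ?thesis unfolding pe_def u1 u2 by (simp add: ac_simps)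
  qed
  have G1: "q powi (-(k+1)) * (1 - q powi (a+1+(k+1))) * (1 - q powi (b+(k+1))) * (1 - q powi (c+(k+1)))
            * (E (k+1) * pe (a+1) (k+1) * pe b (k+1) * pe c (k+1))
          = (y/q) * E (k+1) * (((1 - q powi (a+1+(k+1))) * pe (a+1) (k+1)) * ((1 - q powi (b+(k+1))) * pe b (k+1))
              * ((1 - q powi (c+(k+1))) * pe c (k+1)))"
    unfolding P7 by (simp add: ac_simps)
  have G1': "\<dots> = - (x^2 * (1-al*y)*(1-be*y)*(1-ga*y)) * E k * W"
    unfolding F1 F2 F3 ES W_def using xy qn0
    by (simp add: field_simps) algebra
  have goal': "(1+x)*(E k * W) = R*((1+x)*(E k * ((1-al*y)*(1-al*x)*pe (a+1) k) * pe b k * pe c k))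
     + ((-Lm) * (- (x^2 * (1-al*y)*(1-be*y)*(1-ga*y)) * E k * W)
       - (-Lm) * (y * (1-al*x) * (1-be*x) * (1-ga*x) * (E k * pe (a+1) k * pe b k * pe c k)))"
    using alg unfolding W_def by algebra
  show ?thesis
    unfolding G1 G1' F4 P1 P2 P3 P4 P5 P6 x_def[symmetric] y_def[symmetric] al_def[symmetric] be_def[symmetric]
      ga_def[symmetric] R_def[unfolded D_def, symmetric] Lm_def[unfolded D_def, symmetric]
    using goal' unfolding W_def by (simp add: ac_simps)
qed

definition E' :: "int \<Rightarrow> complex" where "E' k = (-1) powi k * q powi ((3*k^2 + k) div 2)"
definition po :: "int \<Rightarrow> int \<Rightarrow> complex" where "po x k = r (x-k) * r (x+k+1)"

lemma E'_succ: "E' (k+1) = -(q^2 * (q powi k)^3) * E' k"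
proof -
  have d: "(3*(k+1)^2 + (k+1)) div 2 = (3*k^2 + k) div 2 + (3*k+2)"
  proof -
    have "3*(k+1)^2 + (k+1) = (3*k^2 + k) + (3*k+2)*2" by (simp add: power2_eq_square algebra_simps)
    then show ?thesis by (simp only: div_mult_self1)
  qed
  have m1: "((-1::complex) powi (k+1)) = - ((-1) powi k)"
    by (simp add: power_int_add)
  have p3: "q powi (k*3) = (q powi k)^3"
    by (simp add: power_int_mult)
  have p: "q powi (3*k+2) = q^2 * (q powi k)^3"
    using pw_add[of "k*3" 2] p3 by (simp add: mult.commute)
  have "E' (k+1) = (-1) powi (k+1) * q powi ((3*k^2 + k) div 2 + (3*k+2))"
    unfolding E'_def d ..
  also have "\<dots> = - ((-1) powi k) * (q powi ((3*k^2 + k) div 2) * (q^2 * (q powi k)^3))"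
    using p unfolding m1 pw_add[of "(3*k^2 + k) div 2" "3*k+2"] by simp
  finally show ?thesis unfolding E'_def by simp
qed

lemma E'_refl: "E' (-1-k) = -(q * (q powi k)^2) * E' k"
proof -
  have d: "(3*(-1-k)^2 + (-1-k)) div 2 = (3*k^2 + k) div 2 + (2*k+1)"
  proof -
    have "3*(-1-k)^2 + (-1-k) = (3*k^2 + k) + (2*k+1)*2" by (simp add: power2_eq_square algebra_simps)
    then show ?thesis by (simp only: div_mult_self1)
  qed
  have m1: "((-1::complex) powi (-1-k)) = - ((-1) powi k)"
  proof -
    have "((-1::complex) powi (-1-k)) = (-1) powi (k+1)"
      using power_int_minus_one_minus[of "k+1"] by (simp add: algebra_simps)
    then show ?thesis by (simp add: power_int_add)
  qed
  have p2: "q powi (k*2) = (q powi k)^2"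
    by (simp add: power_int_mult)
  have p: "q powi (2*k+1) = q * (q powi k)^2"
    using pw_add[of "k*2" 1] p2 by (simp add: mult.commute)
  have "E' (-1-k) = (-1) powi (-1-k) * q powi ((3*k^2 + k) div 2 + (2*k+1))"
    unfolding E'_def d ..
  also have "\<dots> = - ((-1) powi k) * (q powi ((3*k^2 + k) div 2) * (q * (q powi k)^2))"
    using p unfolding m1 pw_add[of "(3*k^2 + k) div 2" "2*k+1"] by simp
  finally show ?thesis unfolding E'_def by simp
qed

lemma wz_odd_pt:
  assumes a0: "a \<ge> 0" and b0: "b \<ge> 0" and c0: "c \<ge> 0"
  shows "(1 - q powi (2*k+1)) * (E' k * po (a+1) k * po b k * po c k)
     = (1 - q powi (a+b+c+2)) / ((1 - q powi (a+1)) * (1 - q powi (a+b+2)) * (1 - q powi (a+c+2)))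
         * ((1 - q powi (2*k+1)) * (E' k * po a k * po b k * po c k))
       + ((- (q powi (a+1) / ((1 - q powi (a+1)) * (1 - q powi (a+b+2)) * (1 - q powi (a+c+2))))
            * (q powi (-(k+1)) * (1 - q powi (k+1)) * (1 - q powi (a+2+(k+1))) * (1 - q powi (b+1+(k+1))) * (1 - q powi (c+1+(k+1)))
            * (E' (k+1) * po (a+1) (k+1) * po b (k+1) * po c (k+1))))
        - (- (q powi (a+1) / ((1 - q powi (a+1)) * (1 - q powi (a+b+2)) * (1 - q powi (a+c+2))))
            * (q powi (-k) * (1 - q powi k) * (1 - q powi (a+2+k)) * (1 - q powi (b+1+k)) * (1 - q powi (c+1+k))
            * (E' k * po (a+1) k * po b k * po c k))))"
proof -
  define x where "x = q powi k"
  define y where "y = q powi (-k)"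
  define al where "al = q powi (a+1)"
  define be where "be = q powi b"
  define ga where "ga = q powi c"
  define W where "W = po (a+1) k * po b k * po c k"
  define D where "D = (1 - al) * (1 - q*al*be) * (1 - q*al*ga)"
  define R where "R = (1 - q*al*be*ga) / D"
  define Lm where "Lm = al / D"
  have xy: "x * y = 1" unfolding x_def y_def by (rule pw_neg)
  have Q1: "q powi (a+b+2) = q*al*be" unfolding al_def be_def
    using pw_add[of "a+1" b] pw_add[of "a+1+b" 1] by (simp add: algebra_simps)
  have Q2: "q powi (a+c+2) = q*al*ga" unfolding al_def ga_def
    using pw_add[of "a+1" c] pw_add[of "a+1+c" 1] by (simp add: algebra_simps)
  have Q3: "q powi (a+b+c+2) = q*al*be*ga" unfolding al_def be_def ga_def
    using pw_add[of "a+1" b] pw_add[of "a+1+b" c] pw_add[of "a+1+b+c" 1] by (simp add: algebra_simps)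
  have n1: "1 - al \<noteq> 0" unfolding al_def using qpowi_ne1[of "a+1"] a0 by simp
  have n2: "1 - q*al*be \<noteq> 0" using qpowi_ne1[of "a+b+2"] a0 b0 Q1 by simp
  have n3: "1 - q*al*ga \<noteq> 0" using qpowi_ne1[of "a+c+2"] a0 c0 Q2 by simp
  have alg: "(1-q*x^2)*(1 - R * ((1-al*y)*(1-q*al*x))) = Lm*(q*x^2*(1-q*x)*(1-al*y)*(1-be*y)*(1-ga*y) + y*(1-x)*(1-q*al*x)*(1-q*be*x)*(1-q*ga*x))"
    unfolding R_def Lm_def D_def by (rule wz_odd_alg[OF xy n1 n2 n3])
  have P0: "q powi (2*k+1) = q*x^2" unfolding x_def
    using pw_add[of "k*2" 1] by (simp add: power_int_mult mult.commute)
  have P4: "q powi (a+2+k) = q*al*x" unfolding al_def x_def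
    using pw_add[of "a+1" 1] pw_add[of "a+1+1" k] by (simp add: algebra_simps)
  have P5: "q powi (b+1+k) = q*be*x" unfolding be_def x_def
    using pw_add[of b 1] pw_add[of "b+1" k] by (simp add: algebra_simps)
  have P6: "q powi (c+1+k) = q*ga*x" unfolding ga_def x_def
    using pw_add[of c 1] pw_add[of "c+1" k] by (simp add: algebra_simps)
  have P7: "q powi (-(k+1)) = y / q" unfolding y_def using pw_add[of "-k" "-1"] qn0
    by (simp add: power_int_minus field_simps)
  have P8: "q powi (k+1) = q*x" unfolding x_def using pw_add[of k 1] by simp
  have ES: "E' (k+1) = -(q^2 * x^3) * E' k" unfolding x_def by (rule E'_succ)
  have F1: "(1 - q powi (a+2+(k+1))) * po (a+1) (k+1) = (1 - al*y) * po (a+1) k"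
  proof -
    have u1: "(1 - q powi (a+2+(k+1))) * r (a+1+(k+1)+1) = r (a+1+k+1)" using r_rec[of "a+2+(k+1)"] by (simp add: algebra_simps)
    have u2: "r (a+1-(k+1)) = (1 - al*y) * r (a+1-k)"
      using r_rec2[of "a-k"] pw_add[of "a+1" "-k"] unfolding al_def y_def by (simp add: algebra_simps)
    have "(1 - q powi (a+2+(k+1))) * po (a+1) (k+1) = r (a+1-(k+1)) * ((1 - q powi (a+2+(k+1))) * r (a+1+(k+1)+1))"
      by (simp add: po_def ac_simps)
    also have "\<dots> = (1 - al*y) * r (a+1-k) * r (a+1+k+1)" by (simp only: u1 u2)
    finally show ?thesis by (simp add: po_def ac_simps)
  qed
  have F2: "(1 - q powi (b+1+(k+1))) * po b (k+1) = (1 - be*y) * po b k"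
  proof -
    have u1: "(1 - q powi (b+1+(k+1))) * r (b+(k+1)+1) = r (b+k+1)" using r_rec[of "b+1+(k+1)"] by (simp add: algebra_simps)
    have u2: "r (b-(k+1)) = (1 - be*y) * r (b-k)"
      using r_rec'[of "b-k"] pw_add[of b "-k"] unfolding be_def y_def by (simp add: algebra_simps)
    have "(1 - q powi (b+1+(k+1))) * po b (k+1) = r (b-(k+1)) * ((1 - q powi (b+1+(k+1))) * r (b+(k+1)+1))"
      by (simp add: po_def ac_simps)
    also have "\<dots> = (1 - be*y) * r (b-k) * r (b+k+1)" by (simp only: u1 u2)
    finally show ?thesis by (simp add: po_def ac_simps)
  qed
  have F3: "(1 - q powi (c+1+(k+1))) * po c (k+1) = (1 - ga*y) * po c k"
  proof -
    have u1: "(1 - q powi (c+1+(k+1))) * r (c+(k+1)+1) = r (c+k+1)" using r_rec[of "c+1+(k+1)"] by (simp add: algebra_simps)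
    have u2: "r (c-(k+1)) = (1 - ga*y) * r (c-k)"
      using r_rec'[of "c-k"] pw_add[of c "-k"] unfolding ga_def y_def by (simp add: algebra_simps)
    have "(1 - q powi (c+1+(k+1))) * po c (k+1) = r (c-(k+1)) * ((1 - q powi (c+1+(k+1))) * r (c+(k+1)+1))"
      by (simp add: po_def ac_simps)
    also have "\<dots> = (1 - ga*y) * r (c-k) * r (c+k+1)" by (simp only: u1 u2)
    finally show ?thesis by (simp add: po_def ac_simps)
  qed
  have F4: "po a k = (1 - al*y) * (1 - q*al*x) * po (a+1) k"
  proof -
    have u1: "r (a-k) = (1 - al*y) * r (a+1-k)"
      using r_rec2[of "a-k"] pw_add[of "a+1" "-k"] unfolding al_def y_def by (simp add: algebra_simps)
    have u2: "r (a+k+1) = (1 - q*al*x) * r (a+1+k+1)"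
      using r_rec2[of "a+k+1"] P4 by (simp add: algebra_simps)
    show ?thesis unfolding po_def u1 u2 by (simp add: ac_simps)
  qed
  have G1: "q powi (-(k+1)) * (1 - q powi (k+1)) * (1 - q powi (a+2+(k+1))) * (1 - q powi (b+1+(k+1))) * (1 - q powi (c+1+(k+1)))
            * (E' (k+1) * po (a+1) (k+1) * po b (k+1) * po c (k+1))
          = (y/q) * (1 - q powi (k+1)) * E' (k+1) * (((1 - q powi (a+2+(k+1))) * po (a+1) (k+1)) * ((1 - q powi (b+1+(k+1))) * po b (k+1))
              * ((1 - q powi (c+1+(k+1))) * po c (k+1)))"
    unfolding P7 by (simp add: ac_simps)
  have G1': "\<dots> = - (q*x^2*(1-q*x)*(1-al*y)*(1-be*y)*(1-ga*y)) * E' k * W"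
    unfolding F1 F2 F3 ES P8 W_def using xy qn0
    by (simp add: field_simps) algebra
  have goal': "(1-q*x^2)*(E' k * W) = R*((1-q*x^2)*(E' k * ((1-al*y)*(1-q*al*x)*po (a+1) k) * po b k * po c k))
     + ((-Lm) * (- (q*x^2*(1-q*x)*(1-al*y)*(1-be*y)*(1-ga*y)) * E' k * W)
       - (-Lm) * (y * (1-x) * (1-q*al*x) * (1-q*be*x) * (1-q*ga*x) * (E' k * po (a+1) k * po b k * po c k)))"
    using alg unfolding W_def by algebra
  show ?thesis
    unfolding G1 G1' F4 Q1 Q2 Q3 P0 P4 P5 P6 x_def[symmetric] y_def[symmetric] al_def[symmetric] be_def[symmetric]
      ga_def[symmetric] R_def[unfolded D_def, symmetric] Lm_def[unfolded D_def, symmetric]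
    using goal' unfolding W_def by (simp add: ac_simps)
qed

end


context qctx begin

lemma sum_neg_int: "(\<Sum>k\<in>{-M..M::int}. f (-k)) = (\<Sum>k\<in>{-M..M}. f k)"
  by (rule sum.reindex_bij_witness[of _ uminus uminus]) auto

lemma sum_refl_int: "(\<Sum>k\<in>{-M-1..M::int}. f (-1-k)) = (\<Sum>k\<in>{-M-1..M}. f k)"
  by (rule sum.reindex_bij_witness[of _ "\<lambda>k. -1-k" "\<lambda>k. -1-k"]) auto

lemma pe_neg: "pe x (-k) = pe x k" unfolding pe_def by (simp add: ac_simps)
lemma po_refl: "po x (-1-k) = po x k" unfolding po_def by (simp add: algebra_simps)

definition Ze :: "int \<Rightarrow> int \<Rightarrow> int \<Rightarrow> complex" where
  "Ze a b c = Qi (a+b+c) * r a * r b * r c * r (a+b) * r (b+c) * r (a+c)"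

lemma Ze_step:
  assumes "a \<ge> 0" "b \<ge> 0" "c \<ge> 0"
  shows "Ze (a+1) b c = (1 - q powi (a+b+c+1)) / ((1 - q powi (a+1)) * (1 - q powi (a+b+1)) * (1 - q powi (a+c+1))) * Ze a b c"
proof -
  have n1: "1 - q powi (a+1) \<noteq> 0" using qpowi_ne1[of "a+1"] assms by simp
  have n2: "1 - q powi (a+b+1) \<noteq> 0" using qpowi_ne1[of "a+b+1"] assms by simp
  have n3: "1 - q powi (a+c+1) \<noteq> 0" using qpowi_ne1[of "a+c+1"] assms by simp
  have e1: "Qi (a+1+b+c) = Qi (a+b+c) * (1 - q powi (a+b+c+1))"
    using Qi_rec[of "a+b+c"] assms by (simp add: algebra_simps)
  have e2: "r a = (1 - q powi (a+1)) * r (a+1)" by (rule r_rec2)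
  have e3: "r (a+b) = (1 - q powi (a+b+1)) * r (a+1+b)" using r_rec2[of "a+b"] by (simp add: algebra_simps)
  have e4: "r (a+c) = (1 - q powi (a+c+1)) * r (a+1+c)" using r_rec2[of "a+c"] by (simp add: algebra_simps)
  have L: "Ze (a+1) b c = Qi (a+b+c) * (1 - q powi (a+b+c+1)) * r (a+1) * r b * r c * r (a+1+b) * r (b+c) * r (a+1+c)"
    unfolding Ze_def e1 by simp
  have Rr: "Ze a b c = ((1 - q powi (a+1)) * (1 - q powi (a+b+1)) * (1 - q powi (a+c+1))) * (Qi (a+b+c) * r (a+1) * r b * r c * r (a+1+b) * r (b+c) * r (a+1+c))"
    unfolding Ze_def e2 e3 e4 by (simp add: ac_simps)
  have nD: "(1 - q powi (a+1)) * (1 - q powi (a+b+1)) * (1 - q powi (a+c+1)) \<noteq> 0" using n1 n2 n3 by simp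
  show ?thesis unfolding L Rr using nD by (simp add: ac_simps)
qed

lemma dixon_even_sym:
  assumes b0: "b \<ge> 0" and c0: "c \<ge> 0"
  shows "\<forall>M. int a \<le> M \<longrightarrow> (\<Sum>k\<in>{-M..M}. (1 + q powi k) * (E k * pe (int a) k * pe b k * pe c k)) = 2 * Ze (int a) b c"
proof (induction a)
  case 0
  show ?case
  proof (intro allI impI)
    fix M :: int assume M: "int 0 \<le> M"
    have "(\<Sum>k\<in>{-M..M}. (1 + q powi k) * (E k * pe (int 0) k * pe b k * pe c k))
        = (\<Sum>k\<in>{0}. (1 + q powi k) * (E k * pe (int 0) k * pe b k * pe c k))"
    proof (rule sum.mono_neutral_right)
      show "\<forall>i\<in>{-M..M} - {0}. (1 + q powi i) * (E i * pe (int 0) i * pe b i * pe c i) = 0"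
      proof
        fix i assume "i \<in> {-M..M} - {0}"
        then have "i \<noteq> 0" by simp
        then have "pe 0 i = 0" unfolding pe_def by (cases "i > 0") (auto simp: r_neg)
        then show "(1 + q powi i) * (E i * pe (int 0) i * pe b i * pe c i) = 0" by simp
      qed
    qed (use M in auto)
    also have "\<dots> = 2 * (r b * r b * r c * r c)" by (simp add: E_def pe_def)
    also have "\<dots> = 2 * Ze (int 0) b c" unfolding Ze_def using Qi_r[of "b+c"] b0 c0 by simp
    finally show "(\<Sum>k\<in>{-M..M}. (1 + q powi k) * (E k * pe (int 0) k * pe b k * pe c k)) = 2 * Ze (int 0) b c" .
  qed
next
  case (Suc n)
  show ?case
  proof (intro allI impI)
    fix M :: int assume M: "int (Suc n) \<le> M"
    define a where "a = int n"
    have a0: "a \<ge> 0" by (simp add: a_def)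
    define Rh where "Rh = (1 - q powi (a+b+c+1)) / ((1 - q powi (a+1)) * (1 - q powi (a+b+1)) * (1 - q powi (a+c+1)))"
    define G where "G = (\<lambda>k. (- (q powi (a+1) / ((1 - q powi (a+1)) * (1 - q powi (a+b+1)) * (1 - q powi (a+c+1)))))
            * (q powi (-k) * (1 - q powi (a+1+k)) * (1 - q powi (b+k)) * (1 - q powi (c+k))
            * (E k * pe (a+1) k * pe b k * pe c k)))"
    have IH: "(\<Sum>k\<in>{-M..M}. (1 + q powi k) * (E k * pe a k * pe b k * pe c k)) = 2 * Ze a b c"
      using Suc.IH M unfolding a_def by auto
    have pt: "\<And>k. (1 + q powi k) * (E k * pe (a+1) k * pe b k * pe c k)
        = Rh * ((1 + q powi k) * (E k * pe a k * pe b k * pe c k)) + (G (k+1) - G k)"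
      unfolding Rh_def G_def by (rule wz_even_pt[OF a0 b0 c0])
    have "(\<Sum>k\<in>{-M..M}. (1 + q powi k) * (E k * pe (a+1) k * pe b k * pe c k))
        = Rh * (\<Sum>k\<in>{-M..M}. (1 + q powi k) * (E k * pe a k * pe b k * pe c k)) + (\<Sum>k\<in>{-M..M}. G (k+1) - G k)"
      unfolding pt by (simp add: sum.distrib sum_distrib_left)
    also have "(\<Sum>k\<in>{-M..M}. G (k+1) - G k) = G (M+1) - G (-M)"
      by (rule sum_int_telescope) (use M in simp)
    also have "G (M+1) = 0"
    proof -
      have "pe (a+1) (M+1) = 0" unfolding pe_def using M a_def by (simp add: r_neg)
      then show ?thesis unfolding G_def by simp
    qed
    also have "G (-M) = 0"
    proof -
      have "(1 - q powi (a+1+ -M)) * pe (a+1) (-M) = 0"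
      proof -
        have "(1 - q powi (a+1+ -M)) * r (a+1 - -M) * r (a+1+ -M) = r (a+1 - -M) * ((1 - q powi (a+1+ -M)) * r (a+1+ -M))"
          by (simp add: ac_simps)
        also have "(1 - q powi (a+1+ -M)) * r (a+1+ -M) = r (a+1+ -M - 1)" by (rule r_rec)
        also have "r (a+1+ -M - 1) = 0" using M a_def by (simp add: r_neg)
        finally show ?thesis unfolding pe_def by (simp add: ac_simps)
      qed
      then show ?thesis unfolding G_def by (simp add: ac_simps)
    qed
    finally have "(\<Sum>k\<in>{-M..M}. (1 + q powi k) * (E k * pe (a+1) k * pe b k * pe c k)) = 2 * (Rh * Ze a b c)"
      using IH by simp
    also have "Rh * Ze a b c = Ze (a+1) b c" unfolding Rh_def using Ze_step[OF a0 b0 c0] by simp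
    finally show "(\<Sum>k\<in>{-M..M}. (1 + q powi k) * (E k * pe (int (Suc n)) k * pe b k * pe c k)) = 2 * Ze (int (Suc n)) b c"
      unfolding a_def by (simp add: add.commute)
  qed
qed

lemma dixon_even:
  assumes a0: "a \<ge> 0" and b0: "b \<ge> 0" and c0: "c \<ge> 0" and M: "a \<le> M"
  shows "(\<Sum>k\<in>{-M..M}. E k * pe a k * pe b k * pe c k) = Ze a b c"
proof -
  obtain n where n: "a = int n" using a0 nonneg_eq_int by blast
  have S: "(\<Sum>k\<in>{-M..M}. (1 + q powi k) * (E k * pe a k * pe b k * pe c k)) = 2 * Ze a b c"
    using dixon_even_sym[OF b0 c0, of n] M n by auto
  have "(\<Sum>k\<in>{-M..M}. q powi k * (E k * pe a k * pe b k * pe c k)) = (\<Sum>k\<in>{-M..M}. E (-k) * pe a (-k) * pe b (-k) * pe c (-k))"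
    by (simp add: E_neg pe_neg ac_simps)
  also have "\<dots> = (\<Sum>k\<in>{-M..M}. E k * pe a k * pe b k * pe c k)"
    by (rule sum_neg_int[where f="\<lambda>k. E k * pe a k * pe b k * pe c k"])
  finally have "(\<Sum>k\<in>{-M..M}. (1 + q powi k) * (E k * pe a k * pe b k * pe c k)) = 2 * (\<Sum>k\<in>{-M..M}. E k * pe a k * pe b k * pe c k)"
    by (simp add: distrib_right sum.distrib)
  then show ?thesis using S by simp
qed

definition Zo :: "int \<Rightarrow> int \<Rightarrow> int \<Rightarrow> complex" where
  "Zo a b c = Qi (a+b+c+1) * r a * r b * r c * r (a+b+1) * r (b+c+1) * r (a+c+1)"

lemma Zo_step:
  assumes "a \<ge> 0" "b \<ge> 0" "c \<ge> 0"
  shows "Zo (a+1) b c = (1 - q powi (a+b+c+2)) / ((1 - q powi (a+1)) * (1 - q powi (a+b+2)) * (1 - q powi (a+c+2))) * Zo a b c"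
proof -
  have n1: "1 - q powi (a+1) \<noteq> 0" using qpowi_ne1[of "a+1"] assms by simp
  have n2: "1 - q powi (a+b+2) \<noteq> 0" using qpowi_ne1[of "a+b+2"] assms by simp
  have n3: "1 - q powi (a+c+2) \<noteq> 0" using qpowi_ne1[of "a+c+2"] assms by simp
  have e1: "Qi (a+1+b+c+1) = Qi (a+b+c+1) * (1 - q powi (a+b+c+2))"
    using Qi_rec[of "a+b+c+1"] assms by (simp add: algebra_simps)
  have e2: "r a = (1 - q powi (a+1)) * r (a+1)" by (rule r_rec2)
  have e3: "r (a+b+1) = (1 - q powi (a+b+2)) * r (a+1+b+1)" using r_rec2[of "a+b+1"] by (simp add: algebra_simps)
  have e4: "r (a+c+1) = (1 - q powi (a+c+2)) * r (a+1+c+1)" using r_rec2[of "a+c+1"] by (simp add: algebra_simps)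
  have L: "Zo (a+1) b c = Qi (a+b+c+1) * (1 - q powi (a+b+c+2)) * r (a+1) * r b * r c * r (a+1+b+1) * r (b+c+1) * r (a+1+c+1)"
    unfolding Zo_def e1 by simp
  have Rr: "Zo a b c = ((1 - q powi (a+1)) * (1 - q powi (a+b+2)) * (1 - q powi (a+c+2))) * (Qi (a+b+c+1) * r (a+1) * r b * r c * r (a+1+b+1) * r (b+c+1) * r (a+1+c+1))"
    unfolding Zo_def e2 e3 e4 by (simp add: ac_simps)
  have nD: "(1 - q powi (a+1)) * (1 - q powi (a+b+2)) * (1 - q powi (a+c+2)) \<noteq> 0" using n1 n2 n3 by simp
  show ?thesis unfolding L Rr using nD by (simp add: ac_simps)
qed

lemma E'_0: "E' 0 = 1" by (simp add: E'_def)
lemma E'_m1: "E' (-1) = -q" using E'_refl[of 0] by (simp add: E'_0)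

lemma dixon_odd_sym:
  assumes b0: "b \<ge> 0" and c0: "c \<ge> 0"
  shows "\<forall>M. int a \<le> M \<longrightarrow> (\<Sum>k\<in>{-M-1..M}. (1 - q powi (2*k+1)) * (E' k * po (int a) k * po b k * po c k)) = 2 * Zo (int a) b c"
proof (induction a)
  case 0
  show ?case
  proof (intro allI impI)
    fix M :: int assume M: "int 0 \<le> M"
    have "(\<Sum>k\<in>{-M-1..M}. (1 - q powi (2*k+1)) * (E' k * po (int 0) k * po b k * po c k))
        = (\<Sum>k\<in>{-1,0}. (1 - q powi (2*k+1)) * (E' k * po (int 0) k * po b k * po c k))"
    proof (rule sum.mono_neutral_right)
      show "\<forall>i\<in>{-M-1..M} - {-1,0}. (1 - q powi (2*i+1)) * (E' i * po (int 0) i * po b i * po c i) = 0"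
      proof
        fix i assume "i \<in> {-M-1..M} - {-1,0}"
        then have "i \<noteq> 0" "i \<noteq> -1" by auto
        then have "po 0 i = 0" unfolding po_def by (cases "i > 0") (auto simp: r_neg)
        then show "(1 - q powi (2*i+1)) * (E' i * po (int 0) i * po b i * po c i) = 0" by simp
      qed
    qed (use M in auto)
    also have "\<dots> = (1 - q powi (-1)) * (E' (-1) * po 0 (-1) * po b (-1) * po c (-1)) + (1 - q) * (E' 0 * po 0 0 * po b 0 * po c 0)"
      by simp
    also have "\<dots> = 2 * ((1 - q) * r 1) * (r b * r (b+1) * r c * r (c+1))"
      unfolding E'_m1 E'_0 po_def using qn0 by (simp add: power_int_minus field_simps)
    also have "(1 - q) * r 1 = 1" using r_rec[of 1] by simp
    also have "2 * 1 * (r b * r (b+1) * r c * r (c+1)) = 2 * Zo (int 0) b c"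
      unfolding Zo_def using Qi_r[of "b+c+1"] b0 c0 by (simp add: ac_simps)
    finally show "(\<Sum>k\<in>{-M-1..M}. (1 - q powi (2*k+1)) * (E' k * po (int 0) k * po b k * po c k)) = 2 * Zo (int 0) b c" .
  qed
next
  case (Suc n)
  show ?case
  proof (intro allI impI)
    fix M :: int assume M: "int (Suc n) \<le> M"
    define a where "a = int n"
    have a0: "a \<ge> 0" by (simp add: a_def)
    define Rh where "Rh = (1 - q powi (a+b+c+2)) / ((1 - q powi (a+1)) * (1 - q powi (a+b+2)) * (1 - q powi (a+c+2)))"
    define G where "G = (\<lambda>k. (- (q powi (a+1) / ((1 - q powi (a+1)) * (1 - q powi (a+b+2)) * (1 - q powi (a+c+2)))))
            * (q powi (-k) * (1 - q powi k) * (1 - q powi (a+2+k)) * (1 - q powi (b+1+k)) * (1 - q powi (c+1+k))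
            * (E' k * po (a+1) k * po b k * po c k)))"
    have IH: "(\<Sum>k\<in>{-M-1..M}. (1 - q powi (2*k+1)) * (E' k * po a k * po b k * po c k)) = 2 * Zo a b c"
      using Suc.IH M unfolding a_def by auto
    have pt: "\<And>k. (1 - q powi (2*k+1)) * (E' k * po (a+1) k * po b k * po c k)
        = Rh * ((1 - q powi (2*k+1)) * (E' k * po a k * po b k * po c k)) + (G (k+1) - G k)"
      unfolding Rh_def G_def by (rule wz_odd_pt[OF a0 b0 c0])
    have "(\<Sum>k\<in>{-M-1..M}. (1 - q powi (2*k+1)) * (E' k * po (a+1) k * po b k * po c k))
        = Rh * (\<Sum>k\<in>{-M-1..M}. (1 - q powi (2*k+1)) * (E' k * po a k * po b k * po c k)) + (\<Sum>k\<in>{-M-1..M}. G (k+1) - G k)"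
      unfolding pt by (simp add: sum.distrib sum_distrib_left)
    also have "(\<Sum>k\<in>{-M-1..M}. G (k+1) - G k) = G (M+1) - G (-M-1)"
      by (rule sum_int_telescope) (use M in simp)
    also have "G (M+1) = 0"
    proof -
      have "po (a+1) (M+1) = 0" unfolding po_def using M a_def by (simp add: r_neg)
      then show ?thesis unfolding G_def by simp
    qed
    also have "G (-M-1) = 0"
    proof -
      have ix: "a+2+(-M-1) = a+1+(-M-1)+1" by simp
      have "(1 - q powi (a+2+(-M-1))) * po (a+1) (-M-1) = 0"
      proof -
        have "(1 - q powi (a+2+(-M-1))) * po (a+1) (-M-1) = r (a+1 - (-M-1)) * ((1 - q powi (a+1+(-M-1)+1)) * r (a+1+(-M-1)+1))"
          unfolding po_def ix by (simp add: ac_simps)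
        also have "(1 - q powi (a+1+(-M-1)+1)) * r (a+1+(-M-1)+1) = r (a+1+(-M-1)+1 - 1)" by (rule r_rec)
        also have "r (a+1+(-M-1)+1 - 1) = 0" using M a_def by (simp add: r_neg)
        finally show ?thesis by simp
      qed
      then show ?thesis unfolding G_def by (simp add: ac_simps)
    qed
    finally have "(\<Sum>k\<in>{-M-1..M}. (1 - q powi (2*k+1)) * (E' k * po (a+1) k * po b k * po c k)) = 2 * (Rh * Zo a b c)"
      using IH by simp
    also have "Rh * Zo a b c = Zo (a+1) b c" unfolding Rh_def using Zo_step[OF a0 b0 c0] by simp
    finally show "(\<Sum>k\<in>{-M-1..M}. (1 - q powi (2*k+1)) * (E' k * po (int (Suc n)) k * po b k * po c k)) = 2 * Zo (int (Suc n)) b c"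
      unfolding a_def by (simp add: add.commute)
  qed
qed

lemma dixon_odd:
  assumes a0: "a \<ge> 0" and b0: "b \<ge> 0" and c0: "c \<ge> 0" and M: "a \<le> M"
  shows "(\<Sum>k\<in>{-M-1..M}. E' k * po a k * po b k * po c k) = Zo a b c"
proof -
  obtain n where n: "a = int n" using a0 nonneg_eq_int by blast
  have S: "(\<Sum>k\<in>{-M-1..M}. (1 - q powi (2*k+1)) * (E' k * po a k * po b k * po c k)) = 2 * Zo a b c"
    using dixon_odd_sym[OF b0 c0, of n] M n by auto
  have pt: "\<And>k. q powi (2*k+1) * (E' k * po a k * po b k * po c k) = - (E' (-1-k) * po a (-1-k) * po b (-1-k) * po c (-1-k))"
  proof -
    fix k
    have "q powi (2*k+1) = q * (q powi k)^2"
      using pw_add[of "k*2" 1] by (simp add: power_int_mult mult.commute)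
    then show "q powi (2*k+1) * (E' k * po a k * po b k * po c k) = - (E' (-1-k) * po a (-1-k) * po b (-1-k) * po c (-1-k))"
      unfolding E'_refl po_refl by (simp add: ac_simps)
  qed
  have "(\<Sum>k\<in>{-M-1..M}. q powi (2*k+1) * (E' k * po a k * po b k * po c k)) = - (\<Sum>k\<in>{-M-1..M}. E' (-1-k) * po a (-1-k) * po b (-1-k) * po c (-1-k))"
    unfolding pt by (simp add: sum_negf)
  also have "(\<Sum>k\<in>{-M-1..M}. E' (-1-k) * po a (-1-k) * po b (-1-k) * po c (-1-k)) = (\<Sum>k\<in>{-M-1..M}. E' k * po a k * po b k * po c k)"
    by (rule sum_refl_int[where f="\<lambda>k. E' k * po a k * po b k * po c k"])
  finally have "(\<Sum>k\<in>{-M-1..M}. (1 - q powi (2*k+1)) * (E' k * po a k * po b k * po c k)) = 2 * (\<Sum>k\<in>{-M-1..M}. E' k * po a k * po b k * po c k)"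
    by (simp add: left_diff_distrib sum_subtractf)
  then show ?thesis using S by simp
qed

end


context qctx begin

lemma V1':
  assumes "c \<ge> 0"
  shows "(\<Sum>i\<in>{0..B}. q powi ((A-i)*(B-i)) * r (A-i) * r (B-i) * r i * r (c+i))
       = Qi (A+B+c) * r A * r B * r (A+c) * r (B+c)"
proof (cases "B \<ge> 0")
  case True then show ?thesis using V1 assms by blast
next
  case False then show ?thesis by (simp add: r_neg)
qed

lemma V2':
  assumes "c \<ge> 0"
  shows "(\<Sum>i\<in>{0..B}. q powi (i*(i+c)) * r i * r (A-i) * r (B-i) * r (c+i))
       = Qi (A+B+c) * r A * r B * r (A+c) * r (B+c)"
proof (cases "B \<ge> 0")
  case True then show ?thesis using V2 assms by blast
next
  case False then show ?thesis by (simp add: r_neg)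
qed

lemma lin_even_pos:
  assumes l0: "l \<ge> 0" and m0: "m \<ge> 0" and k0: "k \<ge> 0"
  shows "Qi (l+m) * pe l k * pe m k = (\<Sum>s\<in>{0..l}. q powi ((l-s)*(m-s)) * r (l-s) * r (m-s) * pe s k)"
proof -
  have "(\<Sum>s\<in>{0..l}. q powi ((l-s)*(m-s)) * r (l-s) * r (m-s) * pe s k)
      = (\<Sum>i\<in>{0-k..l-k}. q powi ((l-(i+k))*(m-(i+k))) * r (l-(i+k)) * r (m-(i+k)) * pe (i+k) k)"
    by (rule sum_shift_int)
  also have "\<dots> = (\<Sum>i\<in>{-k..l+m}. q powi ((l-(i+k))*(m-(i+k))) * r (l-(i+k)) * r (m-(i+k)) * pe (i+k) k)"
    by (rule sum.mono_neutral_left) (use k0 m0 in \<open>auto simp: r_neg\<close>)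
  also have "\<dots> = (\<Sum>i\<in>{0..m-k}. q powi ((l-(i+k))*(m-(i+k))) * r (l-(i+k)) * r (m-(i+k)) * pe (i+k) k)"
    by (rule sum.mono_neutral_right) (use k0 l0 in \<open>auto simp: r_neg pe_def\<close>)
  also have "\<dots> = (\<Sum>i\<in>{0..m-k}. q powi (((l-k)-i)*((m-k)-i)) * r ((l-k)-i) * r ((m-k)-i) * r i * r (2*k+i))"
    by (rule sum.cong) (simp_all add: pe_def algebra_simps)
  also have "\<dots> = Qi ((l-k)+(m-k)+2*k) * r (l-k) * r (m-k) * r ((l-k)+2*k) * r ((m-k)+2*k)"
    by (rule V1') (use k0 in simp)
  also have "\<dots> = Qi (l+m) * pe l k * pe m k" by (simp add: pe_def algebra_simps)
  finally show ?thesis by simp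
qed

lemma lin_even:
  assumes l0: "l \<ge> 0" and m0: "m \<ge> 0"
  shows "Qi (l+m) * pe l k * pe m k = (\<Sum>s\<in>{0..l}. q powi ((l-s)*(m-s)) * r (l-s) * r (m-s) * pe s k)"
proof (cases "k \<ge> 0")
  case True then show ?thesis using lin_even_pos[OF l0 m0] by blast
next
  case False
  then have "Qi (l+m) * pe l (-k) * pe m (-k) = (\<Sum>s\<in>{0..l}. q powi ((l-s)*(m-s)) * r (l-s) * r (m-s) * pe s (-k))"
    using lin_even_pos[OF l0 m0, of "-k"] by simp
  then show ?thesis by (simp add: pe_neg)
qed

lemma lin_odd_pos:
  assumes l0: "l \<ge> 0" and m0: "m \<ge> 0" and k0: "k \<ge> 0"
  shows "Qi (l+m+1) * po l k * po m k = (\<Sum>s\<in>{0..l}. q powi ((l-s)*(m-s)) * r (l-s) * r (m-s) * po s k)"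
proof -
  have "(\<Sum>s\<in>{0..l}. q powi ((l-s)*(m-s)) * r (l-s) * r (m-s) * po s k)
      = (\<Sum>i\<in>{0-k..l-k}. q powi ((l-(i+k))*(m-(i+k))) * r (l-(i+k)) * r (m-(i+k)) * po (i+k) k)"
    by (rule sum_shift_int)
  also have "\<dots> = (\<Sum>i\<in>{-k..l+m}. q powi ((l-(i+k))*(m-(i+k))) * r (l-(i+k)) * r (m-(i+k)) * po (i+k) k)"
    by (rule sum.mono_neutral_left) (use k0 m0 in \<open>auto simp: r_neg\<close>)
  also have "\<dots> = (\<Sum>i\<in>{0..m-k}. q powi ((l-(i+k))*(m-(i+k))) * r (l-(i+k)) * r (m-(i+k)) * po (i+k) k)"
    by (rule sum.mono_neutral_right) (use k0 l0 in \<open>auto simp: r_neg po_def\<close>)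
  also have "\<dots> = (\<Sum>i\<in>{0..m-k}. q powi (((l-k)-i)*((m-k)-i)) * r ((l-k)-i) * r ((m-k)-i) * r i * r ((2*k+1)+i))"
    by (rule sum.cong) (simp_all add: po_def algebra_simps)
  also have "\<dots> = Qi ((l-k)+(m-k)+(2*k+1)) * r (l-k) * r (m-k) * r ((l-k)+(2*k+1)) * r ((m-k)+(2*k+1))"
    by (rule V1') (use k0 in simp)
  also have "\<dots> = Qi (l+m+1) * po l k * po m k" by (simp add: po_def algebra_simps)
  finally show ?thesis by simp
qed

lemma lin_odd:
  assumes l0: "l \<ge> 0" and m0: "m \<ge> 0"
  shows "Qi (l+m+1) * po l k * po m k = (\<Sum>s\<in>{0..l}. q powi ((l-s)*(m-s)) * r (l-s) * r (m-s) * po s k)"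
proof (cases "k \<ge> 0")
  case True then show ?thesis using lin_odd_pos[OF l0 m0] by blast
next
  case False
  then have "Qi (l+m+1) * po l (-1-k) * po m (-1-k) = (\<Sum>s\<in>{0..l}. q powi ((l-s)*(m-s)) * r (l-s) * r (m-s) * po s (-1-k))"
    using lin_odd_pos[OF l0 m0, of "-1-k"] by simp
  then show ?thesis by (simp add: po_refl)
qed

lemma main_even:
  assumes l0: "l \<ge> 0" and m0: "m \<ge> 0" and n0: "n \<ge> 0" and u0: "u \<ge> 0"
  shows "(\<Sum>j\<in>{0..n}. q powi (j*(j+u)) * Qi (l+m+n-j) * r j * r (l-j) * r (m-j) * r (n-j) * r (u+j))
       = (\<Sum>k\<in>{-n..n}. E k * Qi (l+m) * Qi (m+n) * Qi (l+n) * Qi u * r (l-k) * r (m-k) * r (n-k) * r (u-k)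
             * r (l+k) * r (m+k) * r (n+k) * r (u+k))"
proof -
  define w where "w = (\<lambda>s. q powi ((l-s)*(m-s)) * r (l-s) * r (m-s))"
  define S where "S = {0..l+m+n}"
  define T where "T = (\<lambda>s. w s * r (n+s) * Qi (s+n+u) * r s * r n * r (s+u) * r (n+u))"
  have step1: "\<And>j. j \<in> {0..n} \<Longrightarrow> Qi (l+m+n-j) * r (l-j) * r (m-j) = Qi (l+n) * Qi (m+n) * (\<Sum>s\<in>S. w s * r (s-j) * r (n+s))"
  proof -
    fix j assume j: "j \<in> {0..n}"
    have v: "(\<Sum>i\<in>{0..m-j}. q powi (((l-j)-i)*((m-j)-i)) * r ((l-j)-i) * r ((m-j)-i) * r i * r ((n+j)+i))
       = Qi ((l-j)+(m-j)+(n+j)) * r (l-j) * r (m-j) * r ((l-j)+(n+j)) * r ((m-j)+(n+j))"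
      by (rule V1') (use j n0 in simp)
    have "(\<Sum>i\<in>{0..m-j}. q powi (((l-j)-i)*((m-j)-i)) * r ((l-j)-i) * r ((m-j)-i) * r i * r ((n+j)+i))
        = (\<Sum>s\<in>{0 - -j..m-j - -j}. q powi (((l-j)-(s+ -j))*((m-j)-(s+ -j))) * r ((l-j)-(s+ -j)) * r ((m-j)-(s+ -j)) * r (s+ -j) * r ((n+j)+(s+ -j)))"
      by (rule sum_shift_int)
    also have "\<dots> = (\<Sum>s\<in>{j..m}. w s * r (s-j) * r (n+s))"
      by (rule sum.cong) (simp_all add: w_def algebra_simps)
    also have "\<dots> = (\<Sum>s\<in>S. w s * r (s-j) * r (n+s))"
      by (rule sum.mono_neutral_left) (use j l0 m0 n0 in \<open>auto simp: S_def w_def r_neg\<close>)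
    finally have e: "(\<Sum>s\<in>S. w s * r (s-j) * r (n+s)) = Qi (l+m+n-j) * r (l-j) * r (m-j) * r (l+n) * r (m+n)"
      using v by (simp add: algebra_simps)
    have "Qi (l+n) * Qi (m+n) * (Qi (l+m+n-j) * r (l-j) * r (m-j) * r (l+n) * r (m+n))
        = Qi (l+m+n-j) * r (l-j) * r (m-j) * (Qi (l+n) * r (l+n)) * (Qi (m+n) * r (m+n))" by (simp add: ac_simps)
    also have "\<dots> = Qi (l+m+n-j) * r (l-j) * r (m-j)" using Qi_r[of "l+n"] Qi_r[of "m+n"] l0 m0 n0 by simp
    finally show "Qi (l+m+n-j) * r (l-j) * r (m-j) = Qi (l+n) * Qi (m+n) * (\<Sum>s\<in>S. w s * r (s-j) * r (n+s))"
      using e by simp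
  qed
  have "(\<Sum>j\<in>{0..n}. q powi (j*(j+u)) * Qi (l+m+n-j) * r j * r (l-j) * r (m-j) * r (n-j) * r (u+j))
      = (\<Sum>j\<in>{0..n}. q powi (j*(j+u)) * r j * r (n-j) * r (u+j) * (Qi (l+m+n-j) * r (l-j) * r (m-j)))"
    by (rule sum.cong) (simp_all add: ac_simps)
  also have "\<dots> = (\<Sum>j\<in>{0..n}. q powi (j*(j+u)) * r j * r (n-j) * r (u+j) * (Qi (l+n) * Qi (m+n) * (\<Sum>s\<in>S. w s * r (s-j) * r (n+s))))"
    by (rule sum.cong) (simp_all add: step1)
  also have "\<dots> = Qi (l+n) * Qi (m+n) * (\<Sum>s\<in>S. w s * r (n+s) * (\<Sum>j\<in>{0..n}. q powi (j*(j+u)) * r j * r (s-j) * r (n-j) * r (u+j)))"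
    by (simp add: sum_distrib_left sum.swap[of _ "{0..n}"] ac_simps)
  also have "\<dots> = Qi (l+n) * Qi (m+n) * (\<Sum>s\<in>S. T s)"
  proof -
    have "\<And>s. s \<in> S \<Longrightarrow> (\<Sum>j\<in>{0..n}. q powi (j*(j+u)) * r j * r (s-j) * r (n-j) * r (u+j)) = Qi (s+n+u) * r s * r n * r (s+u) * r (n+u)"
      by (rule V2') (use u0 in simp)
    then show ?thesis unfolding T_def by (simp add: ac_simps)
  qed
  finally have LHS: "(\<Sum>j\<in>{0..n}. q powi (j*(j+u)) * Qi (l+m+n-j) * r j * r (l-j) * r (m-j) * r (n-j) * r (u+j))
       = Qi (l+n) * Qi (m+n) * (\<Sum>s\<in>S. T s)" .
  have "(\<Sum>k\<in>{-n..n}. E k * Qi (l+m) * Qi (m+n) * Qi (l+n) * Qi u * r (l-k) * r (m-k) * r (n-k) * r (u-k)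
             * r (l+k) * r (m+k) * r (n+k) * r (u+k))
      = (\<Sum>k\<in>{-n..n}. Qi (m+n) * Qi (l+n) * Qi u * (E k * (Qi (l+m) * pe l k * pe m k) * pe n k * pe u k))"
    by (rule sum.cong) (simp_all add: pe_def ac_simps)
  also have "\<dots> = (\<Sum>k\<in>{-n..n}. Qi (m+n) * Qi (l+n) * Qi u * (E k * (\<Sum>s\<in>{0..l}. w s * pe s k) * pe n k * pe u k))"
    by (rule sum.cong) (simp_all add: lin_even[OF l0 m0] w_def)
  also have "\<dots> = Qi (m+n) * Qi (l+n) * Qi u * (\<Sum>s\<in>{0..l}. w s * (\<Sum>k\<in>{-n..n}. E k * pe n k * pe s k * pe u k))"
    by (simp add: sum_distrib_left sum_distrib_right sum.swap[of _ "{-n..n}"] ac_simps)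
  also have "\<dots> = Qi (m+n) * Qi (l+n) * Qi u * (\<Sum>s\<in>{0..l}. w s * Ze n s u)"
  proof -
    have "\<And>s. s \<in> {0..l} \<Longrightarrow> (\<Sum>k\<in>{-n..n}. E k * pe n k * pe s k * pe u k) = Ze n s u"
      by (rule dixon_even) (use n0 u0 in auto)
    then show ?thesis by simp
  qed
  also have "\<dots> = Qi (m+n) * Qi (l+n) * Qi u * (\<Sum>s\<in>S. w s * Ze n s u)"
    by (rule arg_cong[where f="\<lambda>x. _ * x"], rule sum.mono_neutral_left) (use l0 m0 n0 in \<open>auto simp: S_def w_def r_neg\<close>)
  also have "\<dots> = Qi (l+n) * Qi (m+n) * (\<Sum>s\<in>S. T s)"
  proof -
    have "\<And>s. Qi u * (w s * Ze n s u) = T s"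
    proof -
      fix s
      have "Qi u * (w s * Ze n s u) = (Qi u * r u) * T s" unfolding T_def Ze_def by (simp add: ac_simps)
      then show "Qi u * (w s * Ze n s u) = T s" using Qi_r[of u] u0 by simp
    qed
    then have "Qi u * (\<Sum>s\<in>S. w s * Ze n s u) = (\<Sum>s\<in>S. T s)" by (simp add: sum_distrib_left)
    then show ?thesis by (simp add: ac_simps)
  qed
  finally show ?thesis using LHS by simp
qed

lemma main_odd:
  assumes l0: "l \<ge> 0" and m0: "m \<ge> 0" and n0: "n \<ge> 0" and u0: "u \<ge> 0"
  shows "(\<Sum>j\<in>{0..n}. q powi (j*(j+(u+1))) * Qi (l+m+n-j+1) * r j * r (l-j) * r (m-j) * r (n-j) * r (u+j+1))
       = (\<Sum>k\<in>{-n-1..n}. E' k * Qi (l+m+1) * Qi (m+n+1) * Qi (l+n+1) * Qi u * r (l-k) * r (m-k) * r (n-k) * r (u-k)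
             * r (l+k+1) * r (m+k+1) * r (n+k+1) * r (u+k+1))"
proof -
  define w where "w = (\<lambda>s. q powi ((l-s)*(m-s)) * r (l-s) * r (m-s))"
  define S where "S = {0..l+m+n}"
  define T where "T = (\<lambda>s. w s * r (n+s+1) * Qi (s+n+(u+1)) * r s * r n * r (s+(u+1)) * r (n+(u+1)))"
  have step1: "\<And>j. j \<in> {0..n} \<Longrightarrow> Qi (l+m+n-j+1) * r (l-j) * r (m-j) = Qi (l+n+1) * Qi (m+n+1) * (\<Sum>s\<in>S. w s * r (s-j) * r (n+s+1))"
  proof -
    fix j assume j: "j \<in> {0..n}"
    have v: "(\<Sum>i\<in>{0..m-j}. q powi (((l-j)-i)*((m-j)-i)) * r ((l-j)-i) * r ((m-j)-i) * r i * r ((n+j+1)+i))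
       = Qi ((l-j)+(m-j)+(n+j+1)) * r (l-j) * r (m-j) * r ((l-j)+(n+j+1)) * r ((m-j)+(n+j+1))"
      by (rule V1') (use j n0 in simp)
    have "(\<Sum>i\<in>{0..m-j}. q powi (((l-j)-i)*((m-j)-i)) * r ((l-j)-i) * r ((m-j)-i) * r i * r ((n+j+1)+i))
        = (\<Sum>s\<in>{0 - -j..m-j - -j}. q powi (((l-j)-(s+ -j))*((m-j)-(s+ -j))) * r ((l-j)-(s+ -j)) * r ((m-j)-(s+ -j)) * r (s+ -j) * r ((n+j+1)+(s+ -j)))"
      by (rule sum_shift_int)
    also have "\<dots> = (\<Sum>s\<in>{j..m}. w s * r (s-j) * r (n+s+1))"
      by (rule sum.cong) (simp_all add: w_def algebra_simps)
    also have "\<dots> = (\<Sum>s\<in>S. w s * r (s-j) * r (n+s+1))"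
      by (rule sum.mono_neutral_left) (use j l0 m0 n0 in \<open>auto simp: S_def w_def r_neg\<close>)
    finally have e: "(\<Sum>s\<in>S. w s * r (s-j) * r (n+s+1)) = Qi (l+m+n-j+1) * r (l-j) * r (m-j) * r (l+n+1) * r (m+n+1)"
      using v by (simp add: algebra_simps)
    have "Qi (l+n+1) * Qi (m+n+1) * (Qi (l+m+n-j+1) * r (l-j) * r (m-j) * r (l+n+1) * r (m+n+1))
        = Qi (l+m+n-j+1) * r (l-j) * r (m-j) * (Qi (l+n+1) * r (l+n+1)) * (Qi (m+n+1) * r (m+n+1))" by (simp add: ac_simps)
    also have "\<dots> = Qi (l+m+n-j+1) * r (l-j) * r (m-j)" using Qi_r[of "l+n+1"] Qi_r[of "m+n+1"] l0 m0 n0 by simp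
    finally show "Qi (l+m+n-j+1) * r (l-j) * r (m-j) = Qi (l+n+1) * Qi (m+n+1) * (\<Sum>s\<in>S. w s * r (s-j) * r (n+s+1))"
      using e by simp
  qed
  have "(\<Sum>j\<in>{0..n}. q powi (j*(j+(u+1))) * Qi (l+m+n-j+1) * r j * r (l-j) * r (m-j) * r (n-j) * r (u+j+1))
      = (\<Sum>j\<in>{0..n}. q powi (j*(j+(u+1))) * r j * r (n-j) * r ((u+1)+j) * (Qi (l+m+n-j+1) * r (l-j) * r (m-j)))"
    by (rule sum.cong) (simp_all add: ac_simps)
  also have "\<dots> = (\<Sum>j\<in>{0..n}. q powi (j*(j+(u+1))) * r j * r (n-j) * r ((u+1)+j) * (Qi (l+n+1) * Qi (m+n+1) * (\<Sum>s\<in>S. w s * r (s-j) * r (n+s+1))))"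
    by (rule sum.cong) (simp_all add: step1)
  also have "\<dots> = Qi (l+n+1) * Qi (m+n+1) * (\<Sum>s\<in>S. w s * r (n+s+1) * (\<Sum>j\<in>{0..n}. q powi (j*(j+(u+1))) * r j * r (s-j) * r (n-j) * r ((u+1)+j)))"
    by (simp add: sum_distrib_left sum.swap[of _ "{0..n}"] ac_simps)
  also have "\<dots> = Qi (l+n+1) * Qi (m+n+1) * (\<Sum>s\<in>S. T s)"
  proof -
    have "\<And>s. s \<in> S \<Longrightarrow> (\<Sum>j\<in>{0..n}. q powi (j*(j+(u+1))) * r j * r (s-j) * r (n-j) * r ((u+1)+j)) = Qi (s+n+(u+1)) * r s * r n * r (s+(u+1)) * r (n+(u+1))"
      by (rule V2') (use u0 in simp)
    then show ?thesis unfolding T_def by (simp add: ac_simps)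
  qed
  finally have LHS: "(\<Sum>j\<in>{0..n}. q powi (j*(j+(u+1))) * Qi (l+m+n-j+1) * r j * r (l-j) * r (m-j) * r (n-j) * r (u+j+1))
       = Qi (l+n+1) * Qi (m+n+1) * (\<Sum>s\<in>S. T s)" .
  have "(\<Sum>k\<in>{-n-1..n}. E' k * Qi (l+m+1) * Qi (m+n+1) * Qi (l+n+1) * Qi u * r (l-k) * r (m-k) * r (n-k) * r (u-k)
             * r (l+k+1) * r (m+k+1) * r (n+k+1) * r (u+k+1))
      = (\<Sum>k\<in>{-n-1..n}. Qi (m+n+1) * Qi (l+n+1) * Qi u * (E' k * (Qi (l+m+1) * po l k * po m k) * po n k * po u k))"
    by (rule sum.cong) (simp_all add: po_def ac_simps)
  also have "\<dots> = (\<Sum>k\<in>{-n-1..n}. Qi (m+n+1) * Qi (l+n+1) * Qi u * (E' k * (\<Sum>s\<in>{0..l}. w s * po s k) * po n k * po u k))"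
    by (rule sum.cong) (simp_all add: lin_odd[OF l0 m0] w_def)
  also have "\<dots> = Qi (m+n+1) * Qi (l+n+1) * Qi u * (\<Sum>s\<in>{0..l}. w s * (\<Sum>k\<in>{-n-1..n}. E' k * po n k * po s k * po u k))"
    by (simp add: sum_distrib_left sum_distrib_right sum.swap[of _ "{-n-1..n}"] ac_simps)
  also have "\<dots> = Qi (m+n+1) * Qi (l+n+1) * Qi u * (\<Sum>s\<in>{0..l}. w s * Zo n s u)"
  proof -
    have "\<And>s. s \<in> {0..l} \<Longrightarrow> (\<Sum>k\<in>{-n-1..n}. E' k * po n k * po s k * po u k) = Zo n s u"
      by (rule dixon_odd) (use n0 u0 in auto)
    then show ?thesis by simp
  qed
  also have "\<dots> = Qi (m+n+1) * Qi (l+n+1) * Qi u * (\<Sum>s\<in>S. w s * Zo n s u)"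
    by (rule arg_cong[where f="\<lambda>x. _ * x"], rule sum.mono_neutral_left) (use l0 m0 n0 in \<open>auto simp: S_def w_def r_neg\<close>)
  also have "\<dots> = Qi (l+n+1) * Qi (m+n+1) * (\<Sum>s\<in>S. T s)"
  proof -
    have "\<And>s. Qi u * (w s * Zo n s u) = T s"
    proof -
      fix s
      have "Qi u * (w s * Zo n s u) = (Qi u * r u) * T s" unfolding T_def Zo_def by (simp add: algebra_simps)
      then show "Qi u * (w s * Zo n s u) = T s" using Qi_r[of u] u0 by simp
    qed
    then have "Qi u * (\<Sum>s\<in>S. w s * Zo n s u) = (\<Sum>s\<in>S. T s)" by (simp add: sum_distrib_left)
    then show ?thesis by (simp add: ac_simps)
  qed
  finally show ?thesis using LHS by simp
qed

end


context qctx begin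

lemma lhs_conv:
  fixes l m n u :: nat and c :: nat
  shows "(\<Sum>k=0..n. q ^ (k^2 + (u+c)*k) * qpoch q (l+m+n-k+c)
            * qinv q (int k) * qinv q (int l - int k) * qinv q (int m - int k)
            * qinv q (int n - int k) * qinv q (int u + int k + int c))
       = (\<Sum>j\<in>{0..int n}. q powi (j*(j+(int u + int c))) * Qi (int l+int m+int n-j+int c) * r j * r (int l-j) * r (int m-j) * r (int n-j) * r (int u+j+int c))"
proof (rule sum.reindex_bij_witness[of _ nat int])
  fix a :: nat assume a: "a \<in> {0..n}"
  have e1: "int a * (int a + (int u + int c)) = int (a^2 + (u+c)*a)" by (simp add: power2_eq_square algebra_simps)
  have e2: "nat (int l + int m + int n - int a + int c) = l+m+n-a+c" using a by auto
  show "q powi (int a * (int a + (int u + int c))) * Qi (int l + int m + int n - int a + int c) * r (int a) * r (int l - int a) *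
        r (int m - int a) * r (int n - int a) * r (int u + int a + int c) =
       q ^ (a\<^sup>2 + (u + c) * a) * qpoch q (l + m + n - a + c) * r (int a) * r (int l - int a) * r (int m - int a) *
        r (int n - int a) * r (int u + int a + int c)"
    unfolding e1 power_int_of_nat Qi_def e2 ..
qed auto

end

theorem corollary5p5:
  fixes q :: complex and l m n u :: nat
  assumes "0 < norm q" and "norm q < 1"
  shows "((\<Sum>k=0..n. q ^ (k^2 + u*k) * qpoch q (l+m+n-k)
            * qinv q (int k) * qinv q (int l - int k) * qinv q (int m - int k)
            * qinv q (int n - int k) * qinv q (int u + int k))
       = (\<Sum>k=-int n..int n. (-1) powi k * q powi ((3*k^2 - k) div 2)
            * qpoch q (l+m) * qpoch q (m+n) * qpoch q (l+n) * qpoch q u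
            * qinv q (int l - k) * qinv q (int m - k) * qinv q (int n - k) * qinv q (int u - k)
            * qinv q (int l + k) * qinv q (int m + k) * qinv q (int n + k) * qinv q (int u + k)))
     \<and> ((\<Sum>k=0..n. q ^ (k^2 + (u+1)*k) * qpoch q (l+m+n-k+1)
            * qinv q (int k) * qinv q (int l - int k) * qinv q (int m - int k)
            * qinv q (int n - int k) * qinv q (int u + int k + 1))
       = (\<Sum>k=-int n-1..int n. (-1) powi k * q powi ((3*k^2 + k) div 2)
            * qpoch q (l+m+1) * qpoch q (m+n+1) * qpoch q (l+n+1) * qpoch q u
            * qinv q (int l - k) * qinv q (int m - k) * qinv q (int n - k) * qinv q (int u - k)
            * qinv q (int l + k + 1) * qinv q (int m + k + 1) * qinv q (int n + k + 1)
            * qinv q (int u + k + 1)))"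
proof -
  interpret qctx q using assms by unfold_locales
  have L1: "(\<Sum>k=0..n. q ^ (k^2 + u*k) * qpoch q (l+m+n-k)
            * qinv q (int k) * qinv q (int l - int k) * qinv q (int m - int k)
            * qinv q (int n - int k) * qinv q (int u + int k))
       = (\<Sum>j\<in>{0..int n}. q powi (j*(j+int u)) * Qi (int l+int m+int n-j) * r j * r (int l-j) * r (int m-j) * r (int n-j) * r (int u+j))"
    using lhs_conv[of u 0 l m n] by simp
  have R1: "(\<Sum>k=-int n..int n. (-1) powi k * q powi ((3*k^2 - k) div 2)
            * qpoch q (l+m) * qpoch q (m+n) * qpoch q (l+n) * qpoch q u
            * qinv q (int l - k) * qinv q (int m - k) * qinv q (int n - k) * qinv q (int u - k)
            * qinv q (int l + k) * qinv q (int m + k) * qinv q (int n + k) * qinv q (int u + k))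
       = (\<Sum>k\<in>{-int n..int n}. E k * Qi (int l+int m) * Qi (int m+int n) * Qi (int l+int n) * Qi (int u) * r (int l-k) * r (int m-k) * r (int n-k) * r (int u-k)
             * r (int l+k) * r (int m+k) * r (int n+k) * r (int u+k))"
    unfolding E_def Qi_def by (simp add: nat_add_distrib)
  have L2: "(\<Sum>k=0..n. q ^ (k^2 + (u+1)*k) * qpoch q (l+m+n-k+1)
            * qinv q (int k) * qinv q (int l - int k) * qinv q (int m - int k)
            * qinv q (int n - int k) * qinv q (int u + int k + 1))
       = (\<Sum>j\<in>{0..int n}. q powi (j*(j+(int u+1))) * Qi (int l+int m+int n-j+1) * r j * r (int l-j) * r (int m-j) * r (int n-j) * r (int u+j+1))"
    using lhs_conv[of u 1 l m n] by simp
  have R2: "(\<Sum>k=-int n-1..int n. (-1) powi k * q powi ((3*k^2 + k) div 2)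
            * qpoch q (l+m+1) * qpoch q (m+n+1) * qpoch q (l+n+1) * qpoch q u
            * qinv q (int l - k) * qinv q (int m - k) * qinv q (int n - k) * qinv q (int u - k)
            * qinv q (int l + k + 1) * qinv q (int m + k + 1) * qinv q (int n + k + 1)
            * qinv q (int u + k + 1))
       = (\<Sum>k\<in>{-int n-1..int n}. E' k * Qi (int l+int m+1) * Qi (int m+int n+1) * Qi (int l+int n+1) * Qi (int u) * r (int l-k) * r (int m-k) * r (int n-k) * r (int u-k)
             * r (int l+k+1) * r (int m+k+1) * r (int n+k+1) * r (int u+k+1))"
    unfolding E'_def Qi_def by (simp add: nat_add_distrib)
  show ?thesis
    unfolding L1 R1 L2 R2
    using main_even[of "int l" "int m" "int n" "int u"] main_odd[of "int l" "int m" "int n" "int u"] by simp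
qed


end
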